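(* Let $\beta>1$ and $M\ge1$, and let $$g(\mathbf{p})=\log2-\frac{\beta|\mathbf{p}|^2}{2}+\big\langle\log\cosh(\beta\,\mathbf{s}\cdot\mathbf{p})\big\rangle_{\mathbf{s}},\qquad \mathbf{p}\in\mathbb{R}^M.$$ Then the global maximum of $g$ (equivalently the minimum of the free energy $-g/\beta$) is attained exactly at the two symmetric points $\mathbf{p}=\pm m_0(\beta)\mathbf{1}$.
   Context: $m_0(\beta)$ is the largest nonnegative solution of $m=\tanh(\beta m)$ (positive for $\beta>1$). $\langle\cdot\rangle_{\mathbf{s}}$ is expectation over $\mathbf{s}\in\{-1,1\}^M$ with i.i.d. entries of mean $m_0(\beta)$. *)

theory Defs
  imports "HOL-Analysis.Analysis"
begin

definition m0 :: "real \<Rightarrow> real" where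
  "m0 \<beta> = Sup {m. 0 \<le> m \<and> m = tanh (\<beta> * m)}"

text \<open>Spin configurations s in {-1,1}^M, with M = CARD('n).\<close>
definition spins :: "(real ^ 'n::finite) set" where
  "spins = {s. \<forall>i. s $ i = 1 \<or> s $ i = -1}"

text \<open>Probability of s under i.i.d. entries with mean m: each entry is 1 w.p. (1+m)/2.\<close>
definition spin_weight :: "real \<Rightarrow> real ^ 'n::finite \<Rightarrow> real" where
  "spin_weight m s = (\<Prod>i\<in>UNIV. (1 + m * s $ i) / 2)"

definition spin_avg :: "real \<Rightarrow> (real ^ 'n::finite \<Rightarrow> real) \<Rightarrow> real" where
  "spin_avg \<beta> f = (\<Sum>s\<in>spins. spin_weight (m0 \<beta>) s * f s)"

definition gfun :: "real \<Rightarrow> real ^ 'n::finite \<Rightarrow> real" where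
  "gfun \<beta> p = ln 2 - \<beta> * (norm p)\<^sup>2 / 2
      + spin_avg \<beta> (\<lambda>s. ln (cosh (\<beta> * (s \<bullet> p))))"

end

theory Submission
  imports Defs
begin


lemma sinh_gt_self: "y > 0 \<Longrightarrow> sinh y > (y::real)"
proof -
  assume y: "y > 0"
  have "(\<lambda>t. sinh t - t) 0 < (\<lambda>t. sinh t - t) y"
  proof (rule DERIV_pos_imp_increasing_open[OF y])
    fix x :: real assume "0 < x" "x < y"
    then have "cosh x > 1" using cosh_real_ge_1[of x] cosh_real_one_iff[of x] by linarith
    then show "\<exists>d. ((\<lambda>t. sinh t - t) has_real_derivative d) (at x) \<and> d > 0"
      by (intro exI[of _ "cosh x - 1"]) (auto intro!: derivative_eq_intros)
  next
    show "continuous_on {0..y} (\<lambda>t. sinh t - t)" by (intro continuous_intros)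
  qed
  then show ?thesis by simp
qed

lemma tanh_div_decr:
  fixes y z :: real assumes "0 < y" "y < z"
  shows "tanh z / z < tanh y / y"
proof -
  have "(\<lambda>t. tanh t / t) y > (\<lambda>t. tanh t / t) z"
  proof (rule DERIV_neg_imp_decreasing_open[OF assms(2)])
    fix x :: real assume x: "y < x" "x < z"
    then have x0: "x > 0" using assms by simp
    have d: "((\<lambda>t. tanh t / t) has_real_derivative ((1 - tanh x ^ 2) * x - tanh x) / x^2) (at x)"
      using x0 by (auto intro!: derivative_eq_intros simp: power2_eq_square)
    have c: "cosh x > 0" by simp
    have "sinh x * cosh x \<ge> sinh x" using cosh_real_ge_1[of x] x0 by (simp add: mult_le_cancel_left1)
    with sinh_gt_self[OF x0] have sc: "x < sinh x * cosh x" by linarith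
    have e: "1 - tanh x ^ 2 = 1 / cosh x ^ 2"
    proof -
      have p: "1 + sinh x ^ 2 > 0" by (simp add: add_pos_nonneg)
      have "tanh x ^ 2 = sinh x ^ 2 / cosh x ^ 2" by (simp add: tanh_def power_divide)
      then show ?thesis using cosh_square_eq[of x] p by (simp add: field_simps)
    qed
    have "(1 - tanh x ^ 2) * x - tanh x = (x - sinh x * cosh x) / cosh x ^ 2"
      unfolding e by (simp add: tanh_def diff_divide_distrib power2_eq_square)
    also have "\<dots> < 0" using sc c by (simp add: divide_neg_pos)
    finally have "((1 - tanh x ^ 2) * x - tanh x) / x^2 < 0" using x0 by (simp add: divide_neg_pos)
    with d show "\<exists>d. ((\<lambda>t. tanh t / t) has_real_derivative d) (at x) \<and> d < 0" by blast
  next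
    show "continuous_on {y..z} (\<lambda>t. tanh t / t)" using assms by (intro continuous_intros) auto
  qed
  then show ?thesis by simp
qed

lemma tanh_lim0: "((\<lambda>y. tanh y / y) \<longlongrightarrow> (1::real)) (at 0)"
proof -
  have "(tanh has_field_derivative (1 - tanh 0 ^ 2)) (at (0::real))"
    by (rule has_field_derivative_tanh[of "\<lambda>x. x", OF _ DERIV_ident, simplified]) simp
  then show ?thesis by (simp add: has_field_derivative_iff)
qed

lemma exists_small:
  fixes \<beta> :: real assumes b: "\<beta> > 1"
  shows "\<exists>e. 0 < e \<and> e < 1 \<and> e < tanh (\<beta> * e)"
proof -
  have "\<forall>\<^sub>F y in at 0. tanh y / y > 1 / \<beta>"
    using order_tendstoD(1)[OF tanh_lim0, of "1/\<beta>"] b by simp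
  then obtain d where d: "d > 0" "\<And>y. y \<noteq> 0 \<Longrightarrow> dist y 0 < d \<Longrightarrow> tanh y / y > 1 / \<beta>"
    unfolding eventually_at by auto
  define y where "y = d / 2"
  have y: "y > 0" "tanh y / y > 1 / \<beta>" using d(1) d(2)[of y] by (auto simp: y_def)
  have "tanh y > y / \<beta>" using y b by (simp add: field_simps)
  moreover have "tanh y < 1" by (rule tanh_real_lt_1)
  ultimately have "y / \<beta> < 1" by linarith
  moreover have "\<beta> * (y / \<beta>) = y" using b by simp
  ultimately show ?thesis using y b \<open>tanh y > y / \<beta>\<close>
    by (intro exI[of _ "y / \<beta>"]) auto
qed

lemma m0_props:
  fixes \<beta> :: real assumes b: "\<beta> > 1"
  shows "0 < m0 \<beta>" "m0 \<beta> < 1" "tanh (\<beta> * m0 \<beta>) = m0 \<beta>"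
    "\<And>x. 0 < x \<Longrightarrow> x < m0 \<beta> \<Longrightarrow> x < tanh (\<beta> * x)"
    "\<And>x. m0 \<beta> < x \<Longrightarrow> tanh (\<beta> * x) < x"
proof -
  obtain e where e: "0 < e" "e < 1" "e < tanh (\<beta> * e)" using exists_small[OF b] by blast
  have "\<exists>x. e \<le> x \<and> x \<le> 1 \<and> (\<lambda>x. tanh (\<beta> * x) - x) x = 0"
    by (rule IVT2') (use e tanh_real_lt_1[of \<beta>] in \<open>auto intro!: continuous_intros\<close>)
  then obtain r where r: "e \<le> r" "r \<le> 1" "tanh (\<beta> * r) = r" by auto
  have r0: "r > 0" using r e by simp
  have r1: "r < 1" using r tanh_real_lt_1[of "\<beta> * r"] by linarith
  have q: "tanh (\<beta> * r) / (\<beta> * r) = 1 / \<beta>" using r r0 b by simp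
  have lt: "x < tanh (\<beta> * x)" if "0 < x" "x < r" for x
  proof -
    have "tanh (\<beta> * r) / (\<beta> * r) < tanh (\<beta> * x) / (\<beta> * x)"
      using tanh_div_decr[of "\<beta> * x" "\<beta> * r"] that b by simp
    then have "1 / \<beta> < tanh (\<beta> * x) / (\<beta> * x)" using q by simp
    then show ?thesis using that b by (simp add: field_simps)
  qed
  have gt: "tanh (\<beta> * x) < x" if "r < x" for x
  proof -
    have "tanh (\<beta> * x) / (\<beta> * x) < tanh (\<beta> * r) / (\<beta> * r)"
      using tanh_div_decr[of "\<beta> * r" "\<beta> * x"] that b r0 by simp
    then have "tanh (\<beta> * x) / (\<beta> * x) < 1 / \<beta>" using q by simp
    then show ?thesis using that b r0 by (simp add: field_simps)
  qed
  have S: "{m. 0 \<le> m \<and> m = tanh (\<beta> * m)} = {0, r}"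
  proof safe
    fix m assume m: "0 \<le> m" "m = tanh (\<beta> * m)" "m \<noteq> 0"
    show "m = r"
    proof (rule ccontr)
      assume "m \<noteq> r"
      then have "m < r \<or> r < m" by linarith
      then show False using lt[of m] gt[of m] m by force
    qed
  qed (use r r0 in auto)
  have "m0 \<beta> = r" unfolding m0_def S using r0 by (simp add: cSup_eq_Max)
  then show "0 < m0 \<beta>" "m0 \<beta> < 1" "tanh (\<beta> * m0 \<beta>) = m0 \<beta>"
    "\<And>x. 0 < x \<Longrightarrow> x < m0 \<beta> \<Longrightarrow> x < tanh (\<beta> * x)"
    "\<And>x. m0 \<beta> < x \<Longrightarrow> tanh (\<beta> * x) < x"
    using r0 r1 r lt gt by auto
qed

definition phi :: "real \<Rightarrow> real \<Rightarrow> real" where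
  "phi \<beta> x = ln (cosh (\<beta> * x)) - \<beta> * x^2 / 2"

lemma phi_deriv: "(phi \<beta> has_real_derivative \<beta> * (tanh (\<beta> * t) - t)) (at t)"
  unfolding phi_def
  by (auto intro!: derivative_eq_intros simp: tanh_def field_simps power2_eq_square)

lemma phi_cont: "continuous_on A (phi \<beta>)"
  unfolding phi_def by (intro continuous_intros) (auto simp: order_less_le cosh_real_pos)

lemma phi_abs: "\<beta> > 0 \<Longrightarrow> phi \<beta> \<bar>x\<bar> = phi \<beta> x"
  unfolding phi_def by (metis abs_mult abs_of_pos cosh_real_abs power2_abs)

lemma phi_strict:
  fixes \<beta> :: real assumes b: "\<beta> > 1" and x: "\<bar>x\<bar> \<noteq> m0 \<beta>"
  shows "phi \<beta> x < phi \<beta> (m0 \<beta>)"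
proof -
  note mp = m0_props[OF b]
  let ?m = "m0 \<beta>"
  have "phi \<beta> \<bar>x\<bar> < phi \<beta> ?m"
  proof (cases "\<bar>x\<bar> < ?m")
    case True
    show ?thesis
    proof (rule DERIV_pos_imp_increasing_open[OF True _ phi_cont])
      fix t assume t: "\<bar>x\<bar> < t" "t < ?m"
      then have "t < tanh (\<beta> * t)" using mp(4)[of t] by simp
      then show "\<exists>d. (phi \<beta> has_real_derivative d) (at t) \<and> d > 0"
        using phi_deriv b by (intro exI[of _ "\<beta> * (tanh (\<beta> * t) - t)"]) auto
    qed
  next
    case False
    then have F: "?m < \<bar>x\<bar>" using x by linarith
    show ?thesis
    proof (rule DERIV_neg_imp_decreasing_open[OF F _ phi_cont])
      fix t assume t: "?m < t" "t < \<bar>x\<bar>"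
      then have "tanh (\<beta> * t) < t" using mp(5)[of t] by simp
      then show "\<exists>d. (phi \<beta> has_real_derivative d) (at t) \<and> d < 0"
        using phi_deriv b by (intro exI[of _ "\<beta> * (tanh (\<beta> * t) - t)"]) (auto simp: mult_pos_neg)
    qed
  qed
  then show ?thesis using phi_abs b by simp
qed

lemma phi_le:
  fixes \<beta> :: real assumes b: "\<beta> > 1"
  shows "phi \<beta> x \<le> phi \<beta> (m0 \<beta>)"
proof (cases "\<bar>x\<bar> = m0 \<beta>")
  case True
  then show ?thesis using phi_abs[of \<beta> x] b by (metis order_refl less_trans zero_less_one)
qed (use phi_strict[OF b] in force)



lemma spins_image: "spins = (\<lambda>g. vec_lambda g) ` (PiE UNIV (\<lambda>_. {1, -1::real}) :: ('n::finite \<Rightarrow> real) set)"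
  (is "_ = ?f ` ?P")
proof safe
  fix s :: "real ^ 'n" assume "s \<in> spins"
  then have "vec_nth s \<in> ?P" by (auto simp: spins_def PiE_def extensional_def)
  then show "s \<in> ?f ` ?P" by (intro image_eqI[of _ _ "vec_nth s"]) auto
next
  fix g :: "'n \<Rightarrow> real" assume "g \<in> ?P"
  then show "vec_lambda g \<in> spins" by (auto simp: spins_def PiE_def)
qed

lemma finite_spins: "finite (spins :: (real ^ 'n::finite) set)"
  unfolding spins_image by (intro finite_imageI finite_PiE) auto

lemma sum_spins_prod:
  fixes f :: "'n::finite \<Rightarrow> real \<Rightarrow> real"
  shows "(\<Sum>s\<in>(spins :: (real ^ 'n) set). \<Prod>i\<in>UNIV. f i (s $ i)) = (\<Prod>i\<in>UNIV. f i 1 + f i (-1))"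
proof -
  have inj: "inj_on (\<lambda>g. vec_lambda g) (PiE UNIV (\<lambda>_. {1, -1::real}) :: ('n \<Rightarrow> real) set)"
    by (auto simp: inj_on_def vec_eq_iff fun_eq_iff)
  have "(\<Sum>s\<in>(spins :: (real ^ 'n) set). \<Prod>i\<in>UNIV. f i (s $ i))
      = (\<Sum>g\<in>PiE UNIV (\<lambda>_. {1, -1::real}). \<Prod>i\<in>UNIV. f i (g i))"
    unfolding spins_image by (subst sum.reindex[OF inj]) simp
  also have "\<dots> = (\<Prod>i\<in>UNIV. \<Sum>y\<in>{1, -1}. f i y)"
    by (rule prod_sum_PiE[symmetric]) auto
  also have "\<dots> = (\<Prod>i\<in>UNIV. f i 1 + f i (-1))" by simp
  finally show ?thesis .
qed

definition D :: "real ^ 'n::finite \<Rightarrow> real" where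
  "D a = (\<Prod>i\<in>UNIV. 2 * cosh (a $ i))"

lemma D_pos: "D a > 0"
  unfolding D_def by (intro prod_pos) auto

lemma D_minus: "D (- a) = D a"
  unfolding D_def by simp

lemma sum_exp: "(\<Sum>s\<in>spins. exp (s \<bullet> a)) = D (a :: real ^ 'n::finite)"
proof -
  have "(\<Sum>s\<in>spins. exp (s \<bullet> a)) = (\<Sum>s\<in>(spins :: (real ^ 'n) set). \<Prod>i\<in>UNIV. exp (s $ i * a $ i))"
    by (simp add: inner_vec_def exp_sum)
  also have "\<dots> = (\<Prod>i\<in>UNIV. exp (a $ i) + exp (- a $ i))"
    by (subst sum_spins_prod) simp
  also have "\<dots> = D a" unfolding D_def cosh_def by (intro prod.cong) auto
  finally show ?thesis .
qed

lemma sum_cosh: "(\<Sum>s\<in>spins. cosh (s \<bullet> a)) = D (a :: real ^ 'n::finite)"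
proof -
  have "(\<Sum>s\<in>spins. cosh (s \<bullet> a)) = (\<Sum>s\<in>spins. exp (s \<bullet> a) / 2 + exp (s \<bullet> (-a)) / 2)"
    by (intro sum.cong) (auto simp: cosh_def add_divide_distrib)
  also have "\<dots> = ((\<Sum>s\<in>spins. exp (s \<bullet> a)) + (\<Sum>s\<in>spins. exp (s \<bullet> (-a)))) / 2"
    by (simp add: sum.distrib sum_divide_distrib[symmetric] add_divide_distrib)
  also have "\<dots> = D a" using sum_exp[of a] sum_exp[of "-a"] D_minus[of a] by simp
  finally show ?thesis .
qed

definition R :: "real ^ 'n::finite \<Rightarrow> real ^ 'n \<Rightarrow> real" where
  "R a s = cosh (s \<bullet> a) / D a"

lemma R_pos [simp]: "R a s > 0"
  unfolding R_def using D_pos[of a] by simp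

lemma R_nonneg [simp]: "R a s \<ge> 0"
  using R_pos[of a s] by linarith

lemma R_ne0 [simp]: "R a s \<noteq> 0"
  using R_pos[of a s] by linarith

lemma sum_R: "(\<Sum>s\<in>spins. R a s) = (1::real)"
  unfolding R_def using D_pos[of a] by (simp add: sum_divide_distrib[symmetric] sum_cosh)

lemma gibbs:
  fixes a b :: "real ^ 'n::finite"
  shows "(\<Sum>s\<in>spins. R b s * ln (R a s)) \<le> (\<Sum>s\<in>spins. R b s * ln (R b s))"
    and "(\<Sum>s\<in>spins. R b s * ln (R a s)) = (\<Sum>s\<in>spins. R b s * ln (R b s)) \<Longrightarrow> \<forall>s\<in>spins. R a s = R b s"
proof -
  define t where "t s = R b s * (R a s / R b s - 1 - ln (R a s / R b s))" for s
  have t0: "t s \<ge> 0" for s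
    unfolding t_def using ln_le_minus_one[of "R a s / R b s"] R_pos[of a s] R_pos[of b s]
    by (intro mult_nonneg_nonneg) auto
  have "(\<Sum>s\<in>spins. t s) = (\<Sum>s\<in>spins. R a s - R b s) - (\<Sum>s\<in>spins. R b s * (ln (R a s) - ln (R b s)))"
    unfolding t_def sum_subtractf[symmetric]
    using R_pos[of a] R_pos[of b] by (intro sum.cong) (auto simp: ln_div field_simps)
  also have "\<dots> = (\<Sum>s\<in>spins. R b s * ln (R b s)) - (\<Sum>s\<in>spins. R b s * ln (R a s))"
    by (simp add: sum_subtractf sum_R right_diff_distrib)
  finally have ts: "(\<Sum>s\<in>spins. t s) = (\<Sum>s\<in>spins. R b s * ln (R b s)) - (\<Sum>s\<in>spins. R b s * ln (R a s))" .
  have "(\<Sum>s\<in>spins. t s) \<ge> 0" by (intro sum_nonneg t0)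
  then show "(\<Sum>s\<in>spins. R b s * ln (R a s)) \<le> (\<Sum>s\<in>spins. R b s * ln (R b s))" using ts by simp
  assume eq: "(\<Sum>s\<in>spins. R b s * ln (R a s)) = (\<Sum>s\<in>spins. R b s * ln (R b s))"
  have "\<forall>s\<in>spins. t s = 0"
    using ts eq sum_nonneg_eq_0_iff[OF finite_spins, of t] t0 by auto
  show "\<forall>s\<in>spins. R a s = R b s"
  proof
    fix s :: "real ^ 'n" assume "s \<in> spins"
    with \<open>\<forall>s\<in>spins. t s = 0\<close> have "t s = 0" by blast
    then have "ln (R a s / R b s) = R a s / R b s - 1"
      unfolding t_def using R_pos[of b s] by simp
    then have "R a s / R b s = 1" by (intro ln_eq_minus_one) simp_all
    then show "R a s = R b s" using R_pos[of b s] by simp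
  qed
qed



lemma spins_uminus: "s \<in> spins \<Longrightarrow> - s \<in> spins"
  by (auto simp: spins_def)

lemma factor_exp:
  fixes m h x :: real assumes m: "m = tanh h" and x: "x = 1 \<or> x = -1"
  shows "(1 + m * x) / 2 = exp (x * h) / (2 * cosh h)"
  using x
proof
  assume "x = 1"
  then show ?thesis unfolding m tanh_def
    using cosh_plus_sinh[of h] by (simp add: field_simps)
next
  assume x1: "x = -1"
  have "(1 + sinh h / cosh h * x) / 2 = (cosh h - sinh h) / (2 * cosh h)"
    using x1 by (simp add: field_simps)
  then show ?thesis unfolding m tanh_def using x1 by (simp add: cosh_minus_sinh)
qed

lemma weight_exp:
  fixes \<beta> :: real and s :: "real ^ 'n::finite" assumes b: "\<beta> > 1" and s: "s \<in> spins"
  shows "spin_weight (m0 \<beta>) s = exp (s \<bullet> (\<chi> i. \<beta> * m0 \<beta>)) / D (\<chi> i. \<beta> * m0 \<beta> :: real ^ 'n)"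
proof -
  let ?h = "\<beta> * m0 \<beta>"
  have m: "m0 \<beta> = tanh ?h" using m0_props(3)[OF b] by simp
  have f: "(1 + m0 \<beta> * s $ i) / 2 = exp (s $ i * ?h) / (2 * cosh ?h)" for i
    using factor_exp[OF m, of "s $ i"] s by (auto simp: spins_def)
  have "spin_weight (m0 \<beta>) s = (\<Prod>i\<in>UNIV. exp (s $ i * ?h) / (2 * cosh ?h))"
    unfolding spin_weight_def by (rule prod.cong[OF refl f])
  also have "\<dots> = (\<Prod>i\<in>UNIV. exp (s $ i * ?h)) / (\<Prod>i\<in>(UNIV::'n set). 2 * cosh ?h)"
    by (simp only: prod_dividef)
  also have "\<dots> = exp (s \<bullet> (\<chi> i. ?h)) / D (\<chi> i. ?h :: real ^ 'n)"
    by (simp add: inner_vec_def exp_sum D_def)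
  finally show ?thesis .
qed

lemma avg_even:
  fixes \<beta> :: real and F :: "real ^ 'n::finite \<Rightarrow> real"
  assumes b: "\<beta> > 1" and ev: "\<And>s. F (- s) = F s"
  shows "spin_avg \<beta> F = (\<Sum>s\<in>spins. R (\<chi> i. \<beta> * m0 \<beta>) s * F s)"
proof -
  define bb :: "real ^ 'n" where "bb = (\<chi> i. \<beta> * m0 \<beta>)"
  have A: "spin_avg \<beta> F = (\<Sum>s\<in>spins. exp (s \<bullet> bb) / D bb * F s)"
    unfolding spin_avg_def bb_def
  proof (intro sum.cong refl)
    fix s :: "real ^ 'n" assume "s \<in> spins"
    show "spin_weight (m0 \<beta>) s * F s = exp (s \<bullet> (\<chi> i. \<beta> * m0 \<beta>)) / D (\<chi> i. \<beta> * m0 \<beta> :: real ^ 'n) * F s"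
      by (simp only: weight_exp[OF b \<open>s \<in> spins\<close>])
  qed
  have B: "(\<Sum>s\<in>spins. exp (s \<bullet> bb) / D bb * F s) = (\<Sum>s\<in>spins. exp (- (s \<bullet> bb)) / D bb * F s)"
    by (rule sum.reindex_bij_witness[of _ uminus uminus]) (auto simp: spins_uminus ev)
  have "(\<Sum>s\<in>spins. R bb s * F s) = (\<Sum>s\<in>spins. (exp (s \<bullet> bb) / D bb * F s + exp (- (s \<bullet> bb)) / D bb * F s) / 2)"
    unfolding R_def cosh_def using D_pos[of bb] by (intro sum.cong refl) (simp add: field_simps)
  also have "\<dots> = ((\<Sum>s\<in>spins. exp (s \<bullet> bb) / D bb * F s) + (\<Sum>s\<in>spins. exp (- (s \<bullet> bb)) / D bb * F s)) / 2"
    by (simp add: sum.distrib sum_divide_distrib[symmetric])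
  also have "\<dots> = spin_avg \<beta> F" using A B by simp
  finally show ?thesis unfolding bb_def by simp
qed

definition G :: "real \<Rightarrow> real ^ 'n::finite \<Rightarrow> real" where
  "G \<beta> a = (\<Sum>s\<in>spins. R (\<chi> i. \<beta> * m0 \<beta>) s * ln (R a s))"

lemma decomp:
  fixes \<beta> :: real and p :: "real ^ 'n::finite"
  assumes b: "\<beta> > 1"
  shows "gfun \<beta> p = ln 2 + G \<beta> (\<beta> *\<^sub>R p) + (\<Sum>i\<in>UNIV. ln 2 + phi \<beta> (p $ i))"
proof -
  define a where "a = \<beta> *\<^sub>R p"
  define bb :: "real ^ 'n" where "bb = (\<chi> i. \<beta> * m0 \<beta>)"
  have "spin_avg \<beta> (\<lambda>s. ln (cosh (\<beta> * (s \<bullet> p)))) = (\<Sum>s\<in>spins. R bb s * ln (cosh (\<beta> * (s \<bullet> p))))"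
    unfolding bb_def by (rule avg_even[OF b]) simp
  also have "\<dots> = (\<Sum>s\<in>spins. R bb s * (ln (R a s) + ln (D a)))"
  proof (intro sum.cong refl)
    fix s :: "real ^ 'n"
    have "cosh (\<beta> * (s \<bullet> p)) = R a s * D a"
      unfolding R_def a_def using D_pos[of "\<beta> *\<^sub>R p"] by simp
    then show "R bb s * ln (cosh (\<beta> * (s \<bullet> p))) = R bb s * (ln (R a s) + ln (D a))"
      using D_pos[of a] by (simp add: ln_mult)
  qed
  also have "\<dots> = G \<beta> a + ln (D a)"
    unfolding G_def bb_def[symmetric] by (simp add: distrib_left sum.distrib sum_distrib_right[symmetric] sum_R)
  finally have S: "spin_avg \<beta> (\<lambda>s. ln (cosh (\<beta> * (s \<bullet> p)))) = G \<beta> a + ln (D a)" .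
  have LD: "ln (D a) = (\<Sum>i\<in>UNIV. ln 2 + ln (cosh (\<beta> * p $ i)))"
    unfolding D_def a_def by (subst ln_prod) (auto simp: ln_mult)
  have N: "(norm p)\<^sup>2 = (\<Sum>i\<in>UNIV. (p $ i)\<^sup>2)"
  proof -
    have "(norm p)\<^sup>2 = p \<bullet> p" by (rule power2_norm_eq_inner)
    also have "\<dots> = (\<Sum>i\<in>UNIV. p $ i * p $ i)" by (simp add: inner_vec_def)
    finally show ?thesis by (simp add: power2_eq_square)
  qed
  have "gfun \<beta> p = ln 2 + G \<beta> a + ((\<Sum>i\<in>UNIV. ln 2 + ln (cosh (\<beta> * p $ i))) - \<beta> * (\<Sum>i\<in>UNIV. (p $ i)\<^sup>2) / 2)"
    unfolding gfun_def S LD N by simp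
  also have "(\<Sum>i\<in>UNIV. ln 2 + ln (cosh (\<beta> * p $ i))) - \<beta> * (\<Sum>i\<in>UNIV. (p $ i)\<^sup>2) / 2
      = (\<Sum>i\<in>UNIV. ln 2 + phi \<beta> (p $ i))"
    unfolding phi_def by (simp add: sum_subtractf sum_distrib_left sum_divide_distrib sum.distrib algebra_simps)
  finally show ?thesis unfolding a_def .
qed



lemma R_neg: "R (- a) s = R a s"
  unfolding R_def by (simp add: D_minus)

theorem mainTheorem5:
  fixes \<beta> :: real
  assumes "\<beta> > 1"
  shows "{p :: real ^ 'n::finite. \<forall>q :: real ^ 'n. gfun \<beta> q \<le> gfun \<beta> p}
         = {m0 \<beta> *\<^sub>R (\<chi> i. 1), - (m0 \<beta> *\<^sub>R (\<chi> i. 1))}"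
proof -
  have b: "\<beta> > 1" by (rule assms)
  note mp = m0_props[OF b]
  define m where "m = m0 \<beta>"
  define v :: "real ^ 'n" where "v = m *\<^sub>R (\<chi> i. 1)"
  define bb :: "real ^ 'n" where "bb = (\<chi> i. \<beta> * m)"
  have vb: "\<beta> *\<^sub>R v = bb" unfolding v_def bb_def by (simp add: vec_eq_iff)
  have vc: "v $ i = m" for i unfolding v_def by simp
  have Gdef: "G \<beta> a = (\<Sum>s\<in>spins. R bb s * ln (R a s))" for a :: "real ^ 'n" unfolding G_def bb_def m_def ..
  have Gle: "G \<beta> a \<le> G \<beta> bb" for a :: "real ^ 'n" unfolding Gdef by (rule gibbs(1))
  define Sv where "Sv = (\<Sum>i\<in>(UNIV::'n set). ln 2 + phi \<beta> m)"
  have Sle: "(\<Sum>i\<in>UNIV. ln 2 + phi \<beta> (q $ i)) \<le> Sv" for q :: "real ^ 'n"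
    unfolding Sv_def m_def by (intro sum_mono) (simp add: phi_le[OF b])
  have gv: "gfun \<beta> v = ln 2 + G \<beta> bb + Sv"
    using decomp[OF b, of v] unfolding vb Sv_def vc by simp
  have gmv: "gfun \<beta> (- v) = gfun \<beta> v"
  proof -
    have "G \<beta> (\<beta> *\<^sub>R (- v)) = G \<beta> bb" unfolding Gdef vb[symmetric] scaleR_minus_right R_neg ..
    moreover have "phi \<beta> ((- v) $ i) = phi \<beta> m" for i
      using phi_abs[of \<beta> "- m"] phi_abs[of \<beta> m] b by (simp add: vc)
    ultimately show ?thesis using decomp[OF b, of "- v"] gv unfolding Sv_def by simp
  qed
  have upper: "gfun \<beta> q \<le> gfun \<beta> v" for q :: "real ^ 'n"
    using decomp[OF b, of q] gv Gle[of "\<beta> *\<^sub>R q"] Sle[of q] by simp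
  have inc: "v \<in> {p. \<forall>q :: real ^ 'n. gfun \<beta> q \<le> gfun \<beta> p}" "- v \<in> {p. \<forall>q :: real ^ 'n. gfun \<beta> q \<le> gfun \<beta> p}"
    using upper gmv by auto
  have only: "p = - v" if max: "\<forall>q :: real ^ 'n. gfun \<beta> q \<le> gfun \<beta> p" and nv: "p \<noteq> v" for p :: "real ^ 'n"
  proof -
    define a where "a = \<beta> *\<^sub>R p"
    have eq: "gfun \<beta> p = gfun \<beta> v" using max upper[of p] by (simp add: order_antisym)
    have Geq: "G \<beta> a = G \<beta> bb" and Seq: "(\<Sum>i\<in>UNIV. ln 2 + phi \<beta> (p $ i)) = Sv"
      using eq decomp[OF b, of p] gv Gle[of a] Sle[of p] unfolding a_def by linarith+
    have Req: "\<forall>s\<in>spins. R a s = R bb s" using Geq gibbs(2)[of bb a] unfolding Gdef by blast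
    have s0: "(\<Sum>i\<in>UNIV. (ln 2 + phi \<beta> m) - (ln 2 + phi \<beta> (p $ i))) = 0"
      using Seq unfolding Sv_def by (simp only: sum_subtractf)
    have "\<forall>i\<in>UNIV. (ln 2 + phi \<beta> m) - (ln 2 + phi \<beta> (p $ i)) = 0"
      using sum_nonneg_eq_0_iff[of UNIV "\<lambda>i. (ln 2 + phi \<beta> m) - (ln 2 + phi \<beta> (p $ i))"] s0
        phi_le[OF b] unfolding m_def by auto
    then have ph: "phi \<beta> (p $ i) = phi \<beta> m" for i by simp
    have pa: "\<bar>p $ i\<bar> = m" for i
      using phi_strict[OF b, of "p $ i"] ph[of i] unfolding m_def by force
    define one :: "real ^ 'n" where "one = (\<chi> i. 1)"
    have one: "one \<in> spins" unfolding one_def spins_def by simp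
    have Dab: "D a = D bb"
      unfolding D_def a_def bb_def
    proof (intro prod.cong refl)
      fix i
      have "cosh (\<beta> * p $ i) = cosh (\<beta> * m)" using pa[of i] b by (simp add: abs_mult)
      then show "2 * cosh ((\<beta> *\<^sub>R p) $ i) = 2 * cosh ((\<chi> i. \<beta> * m) $ i)" by simp
    qed
    have "cosh (one \<bullet> a) = cosh (one \<bullet> bb)"
      using Req one Dab D_pos[of bb] unfolding R_def by auto
    then have "\<bar>one \<bullet> a\<bar> = \<bar>one \<bullet> bb\<bar>" by simp
    moreover have "one \<bullet> a = \<beta> * (\<Sum>i\<in>UNIV. p $ i)"
      unfolding one_def a_def by (simp add: inner_vec_def sum_distrib_left)
    moreover have "one \<bullet> bb = \<beta> * (\<Sum>i\<in>(UNIV::'n set). m)"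
      unfolding one_def bb_def by (simp add: inner_vec_def sum_distrib_left)
    ultimately have "\<bar>\<Sum>i\<in>UNIV. p $ i\<bar> = (\<Sum>i\<in>(UNIV::'n set). m)"
      using b mp(1) unfolding m_def by (simp add: abs_mult)
    then have "(\<Sum>i\<in>UNIV. p $ i) = (\<Sum>i\<in>(UNIV::'n set). m) \<or> (\<Sum>i\<in>UNIV. - p $ i) = (\<Sum>i\<in>(UNIV::'n set). m)"
      by (cases "(\<Sum>i\<in>UNIV. p $ i) < 0") (simp_all add: sum_negf)
    then show "p = - v"
    proof
      assume "(\<Sum>i\<in>UNIV. p $ i) = (\<Sum>i\<in>(UNIV::'n set). m)"
      then have "(\<Sum>i\<in>UNIV. m - p $ i) = 0" by (simp add: sum_subtractf)
      moreover have "\<forall>i\<in>UNIV. m - p $ i \<ge> 0" using pa by (metis abs_ge_self diff_ge_0_iff_ge)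
      ultimately have "\<forall>i\<in>UNIV. m - p $ i = 0" by (simp add: sum_nonneg_eq_0_iff)
      then have "p = v" by (simp add: vec_eq_iff vc)
      with nv show "p = - v" by simp
    next
      assume "(\<Sum>i\<in>UNIV. - p $ i) = (\<Sum>i\<in>(UNIV::'n set). m)"
      then have "(\<Sum>i\<in>UNIV. m + p $ i) = 0" by (simp add: sum.distrib sum_negf)
      moreover have "\<forall>i\<in>UNIV. m + p $ i \<ge> 0" using pa by (metis abs_ge_minus_self add.commute le_add_same_cancel1 neg_le_iff_le add_le_cancel_left diff_ge_0_iff_ge diff_minus_eq_add)
      ultimately have "\<forall>i\<in>UNIV. m + p $ i = 0" by (simp add: sum_nonneg_eq_0_iff)
      then show "p = - v" by (simp add: vec_eq_iff vc eq_neg_iff_add_eq_0 add.commute)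
    qed
  qed
  have "{p. \<forall>q :: real ^ 'n. gfun \<beta> q \<le> gfun \<beta> p} = {v, - v}"
    using inc only by blast
  then show ?thesis unfolding v_def m_def .
qed


end
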